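(* Let $\vec G$ be a finite loopless directed multigraph and $\mathfrak f$ a fraternal completion of $\vec G$ of depth $a$. Then for every arc $e$ of $\vec G$, $$\bigl|\{f\in E_{\mathfrak f}: f\succeq e\}\bigr|\le C(\mathfrak f),\qquad\text{where } C(\mathfrak f)=\sum_{\substack{(i_1,\dots,i_k)\\ k\ge 0,\ i_j\ge 1,\ \sum_j i_j< a}}\ \prod_{j=1}^k \Delta^-(\vec H_{i_j})$$ (the sum ranges over all finite sequences of positive integers with sum less than $a$, including the empty sequence, whose product is $1$).
   Context: Let $\vec G$ be a finite loopless directed multigraph and $a$ a positive integer. A fraternal completion of $\vec G$ of depth $a$ is a triple $\mathfrak f=((E_1,\dots,E_a),w,\kappa)$ such that: $E_1=E(\vec G)$; for $2\le i\le a$, $E_i$ is the arc set of a directed multigraph with vertex set $V(\vec G)$; the sets $E_1,\dots,E_a$ are pairwise disjoint (distinct arcs may have the same head and tail); writing $E_{\mathfrak f}=\bigcup_{1\le i\le a}E_i$, the weight $w(e)$ of $e\in E_{\mathfrak f}$ is the $i$ with $e\in E_i$; $\kappa$ maps each $e\in\bigcup_{1<i\le a}E_i$ to a pair $(f,g)\in E_{\mathfrak f}^2$ with ${\rm tail}(f)\ne{\rm tail}(g)$, $w(e)=w(f)+w(g)$, ${\rm tail}(e)={\rm tail}(f)$, ${\rm head}(e)={\rm tail}(g)$, ${\rm head}(f)={\rm head}(g)$; and conversely, for all $i,j$ with $i+j\le a$ and all $f\in E_i$, $g\in E_j$ with ${\rm tail}(f)\ne{\rm tail}(g)$ and ${\rm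 head}(f)={\rm head}(g)$, there is a unique $e\in E_{i+j}$ with $\kappa(e)\in\{(f,g),(g,f)\}$. Let $\prec$ be the partial order on $E_{\mathfrak f}$ obtained as the transitive closure of the relations $f\prec e$ and $g\prec e$ whenever $\kappa(e)=(f,g)$; $f\preceq e$ means $f\prec e$ or $f=e$. $\vec H_i$ denotes the directed multigraph $(V(\vec G),E_i)$ and $\Delta^-(\vec H_i)$ its maximum in-degree. *)

theory Defs
  imports Main
begin

text \<open>A finite loopless directed multigraph: vertex set V, arc set E, with
  arcs carrying tail and head maps (so parallel arcs are allowed).\<close>
definition loopless_multidigraph ::
  "'v set \<Rightarrow> 'e set \<Rightarrow> ('e \<Rightarrow> 'v) \<Rightarrow> ('e \<Rightarrow> 'v) \<Rightarrow> bool" where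
  "loopless_multidigraph V E tail head \<longleftrightarrow>
     finite V \<and> finite E \<and>
     (\<forall>e\<in>E. tail e \<in> V \<and> head e \<in> V \<and> tail e \<noteq> head e)"

definition all_arcs :: "nat \<Rightarrow> (nat \<Rightarrow> 'e set) \<Rightarrow> 'e set" where
  "all_arcs a Es = (\<Union>i\<in>{1..a}. Es i)"

text \<open>Fraternal completion ((E_1..E_a), w, kappa) of depth a of the digraph
  (V,E,tail,head). Tail and head of all arcs are given by the global maps tail, head.\<close>
definition fraternal_completion ::
  "'v set \<Rightarrow> 'e set \<Rightarrow> ('e \<Rightarrow> 'v) \<Rightarrow> ('e \<Rightarrow> 'v) \<Rightarrow> nat \<Rightarrow>
   (nat \<Rightarrow> 'e set) \<Rightarrow> ('e \<Rightarrow> nat) \<Rightarrow> ('e \<Rightarrow> 'e \<times> 'e) \<Rightarrow> bool" where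
  "fraternal_completion V E tail head a Es w \<kappa> \<longleftrightarrow>
     1 \<le> a \<and>
     Es 1 = E \<and>
     (\<forall>i\<in>{2..a}. \<forall>e\<in>Es i. tail e \<in> V \<and> head e \<in> V) \<and>
     (\<forall>i\<in>{1..a}. \<forall>j\<in>{1..a}. i \<noteq> j \<longrightarrow> Es i \<inter> Es j = {}) \<and>
     (\<forall>i\<in>{1..a}. \<forall>e\<in>Es i. w e = i) \<and>
     (\<forall>i\<in>{2..a}. \<forall>e\<in>Es i.
        fst (\<kappa> e) \<in> all_arcs a Es \<and> snd (\<kappa> e) \<in> all_arcs a Es \<and>
        tail (fst (\<kappa> e)) \<noteq> tail (snd (\<kappa> e)) \<and>
        w e = w (fst (\<kappa> e)) + w (snd (\<kappa> e)) \<and>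
        tail e = tail (fst (\<kappa> e)) \<and>
        head e = tail (snd (\<kappa> e)) \<and>
        head (fst (\<kappa> e)) = head (snd (\<kappa> e))) \<and>
     (\<forall>i j. 1 \<le> i \<longrightarrow> 1 \<le> j \<longrightarrow> i + j \<le> a \<longrightarrow>
        (\<forall>f\<in>Es i. \<forall>g\<in>Es j. tail f \<noteq> tail g \<longrightarrow> head f = head g \<longrightarrow>
           (\<exists>!e. e \<in> Es (i + j) \<and> (\<kappa> e = (f, g) \<or> \<kappa> e = (g, f)))))"

text \<open>Generating relation of the partial order: f \<prec> e and g \<prec> e whenever
  kappa e = (f,g); pairs are (smaller, larger).\<close>
definition kappa_rel :: "nat \<Rightarrow> (nat \<Rightarrow> 'e set) \<Rightarrow> ('e \<Rightarrow> 'e \<times> 'e) \<Rightarrow> ('e \<times> 'e) set" where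
  "kappa_rel a Es \<kappa> =
     {(f, e). \<exists>i\<in>{2..a}. e \<in> Es i \<and> (f = fst (\<kappa> e) \<or> f = snd (\<kappa> e))}"

definition prec_eq :: "nat \<Rightarrow> (nat \<Rightarrow> 'e set) \<Rightarrow> ('e \<Rightarrow> 'e \<times> 'e) \<Rightarrow> 'e \<Rightarrow> 'e \<Rightarrow> bool" where
  "prec_eq a Es \<kappa> f e \<longleftrightarrow> (f, e) \<in> (kappa_rel a Es \<kappa>)\<^sup>*"

definition max_indeg :: "'v set \<Rightarrow> ('e \<Rightarrow> 'v) \<Rightarrow> 'e set \<Rightarrow> nat" where
  "max_indeg V head A = Max (insert 0 ((\<lambda>v. card {e\<in>A. head e = v}) ` V))"

definition completion_bound :: "'v set \<Rightarrow> ('e \<Rightarrow> 'v) \<Rightarrow> nat \<Rightarrow> (nat \<Rightarrow> 'e set) \<Rightarrow> nat" where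
  "completion_bound V head a Es =
     (\<Sum>xs\<in>{xs :: nat list. (\<forall>x\<in>set xs. 1 \<le> x) \<and> sum_list xs < a}.
        prod_list (map (\<lambda>i. max_indeg V head (Es i)) xs))"

end

theory Submission
  imports Defs
begin

fun Rset :: "(nat \<Rightarrow> 'e set) \<Rightarrow> ('e \<Rightarrow> nat) \<Rightarrow> ('e \<Rightarrow> 'e \<times> 'e) \<Rightarrow> ('e \<Rightarrow> 'v) \<Rightarrow> ('e \<Rightarrow> 'v) \<Rightarrow> 'e \<Rightarrow> nat list \<Rightarrow> 'e set" where
  "Rset Es w \<kappa> tail head e [] = {e}"
| "Rset Es w \<kappa> tail head e (i # xs) = {f'. \<exists>f\<in>Rset Es w \<kappa> tail head e xs. \<exists>g\<in>Es i.
      head g = head f \<and> tail f \<noteq> tail g \<and> (\<kappa> f' = (f, g) \<or> \<kappa> f' = (g, f)) \<and> f' \<in> Es (w f + i)}"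

lemma length_le_sum_list: "\<forall>x\<in>set xs. (1::nat) \<le> x \<Longrightarrow> length xs \<le> sum_list xs"
  by (induction xs) auto

lemma elem_le_sum_list: "x \<in> set xs \<Longrightarrow> x \<le> sum_list (xs :: nat list)"
  by (induction xs) auto

locale fcl =
  fixes V :: "'v set" and E :: "'e set" and tail head :: "'e \<Rightarrow> 'v"
    and a :: nat and Es :: "nat \<Rightarrow> 'e set" and w :: "'e \<Rightarrow> nat"
    and \<kappa> :: "'e \<Rightarrow> 'e \<times> 'e"
  assumes lm: "loopless_multidigraph V E tail head"
    and fc: "fraternal_completion V E tail head a Es w \<kappa>"
begin

lemma a1: "1 \<le> a" and Es1: "Es 1 = E"
  and inV: "\<And>i e. i \<in> {2..a} \<Longrightarrow> e \<in> Es i \<Longrightarrow> tail e \<in> V \<and> head e \<in> V"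
  and wt: "\<And>i e. i \<in> {1..a} \<Longrightarrow> e \<in> Es i \<Longrightarrow> w e = i"
  and kap: "\<And>i e. i \<in> {2..a} \<Longrightarrow> e \<in> Es i \<Longrightarrow>
        fst (\<kappa> e) \<in> all_arcs a Es \<and> snd (\<kappa> e) \<in> all_arcs a Es \<and>
        tail (fst (\<kappa> e)) \<noteq> tail (snd (\<kappa> e)) \<and>
        w e = w (fst (\<kappa> e)) + w (snd (\<kappa> e)) \<and>
        tail e = tail (fst (\<kappa> e)) \<and>
        head e = tail (snd (\<kappa> e)) \<and>
        head (fst (\<kappa> e)) = head (snd (\<kappa> e))"
  and uniq: "\<And>i j f g. 1 \<le> i \<Longrightarrow> 1 \<le> j \<Longrightarrow> i + j \<le> a \<Longrightarrow> f \<in> Es i \<Longrightarrow> g \<in> Es j \<Longrightarrow>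
        tail f \<noteq> tail g \<Longrightarrow> head f = head g \<Longrightarrow>
           (\<exists>!e. e \<in> Es (i + j) \<and> (\<kappa> e = (f, g) \<or> \<kappa> e = (g, f)))"
  using fc unfolding fraternal_completion_def by blast+

lemma finV: "finite V" and finE: "finite E" and EV: "\<And>e. e \<in> E \<Longrightarrow> head e \<in> V"
  using lm unfolding loopless_multidigraph_def by auto

lemma arc: "f \<in> all_arcs a Es \<Longrightarrow> 1 \<le> w f \<and> w f \<le> a \<and> f \<in> Es (w f)"
  unfolding all_arcs_def using wt by fastforce

lemma arcI: "1 \<le> i \<Longrightarrow> i \<le> a \<Longrightarrow> f \<in> Es i \<Longrightarrow> f \<in> all_arcs a Es"
  unfolding all_arcs_def by auto

lemma headV: "f \<in> all_arcs a Es \<Longrightarrow> head f \<in> V"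
proof -
  assume f: "f \<in> all_arcs a Es"
  then have "1 \<le> w f" "w f \<le> a" "f \<in> Es (w f)" using arc by auto
  then show ?thesis
  proof (cases "w f = 1")
    case True then show ?thesis using Es1 EV \<open>f \<in> Es (w f)\<close> by auto
  next
    case False then have "w f \<in> {2..a}" using \<open>1 \<le> w f\<close> \<open>w f \<le> a\<close> by auto
    then show ?thesis using inV \<open>f \<in> Es (w f)\<close> by blast
  qed
qed

lemma finEs: "k \<in> {1..a} \<Longrightarrow> finite (Es k)"
proof (induction k rule: less_induct)
  case (less k)
  show ?case
  proof (cases "k = 1")
    case True then show ?thesis using Es1 finE by simp
  next
    case False
    with less.prems have k2: "k \<in> {2..a}" by auto
    define B where "B = (\<Union>i\<in>{1..<k}. Es i)"
    have finB: "finite B" unfolding B_def using less.IH less.prems by auto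
    have img: "\<kappa> ` Es k \<subseteq> B \<times> B"
    proof
      fix p assume "p \<in> \<kappa> ` Es k"
      then obtain e where e: "e \<in> Es k" "p = \<kappa> e" by auto
      note K = kap[OF k2 e(1)]
      have we: "w e = k" using wt k2 e(1) by auto
      have A1: "1 \<le> w (fst (\<kappa> e)) \<and> fst (\<kappa> e) \<in> Es (w (fst (\<kappa> e)))" using arc K by blast
      have A2: "1 \<le> w (snd (\<kappa> e)) \<and> snd (\<kappa> e) \<in> Es (w (snd (\<kappa> e)))" using arc K by blast
      have "w (fst (\<kappa> e)) < k" "w (snd (\<kappa> e)) < k" using A1 A2 K we by auto
      then have "fst (\<kappa> e) \<in> B" "snd (\<kappa> e) \<in> B" unfolding B_def using A1 A2 by auto
      then show "p \<in> B \<times> B" using e(2) by (simp add: mem_Times_iff)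
    qed
    have inj: "inj_on \<kappa> (Es k)"
    proof
      fix e1 e2 assume e: "e1 \<in> Es k" "e2 \<in> Es k" "\<kappa> e1 = \<kappa> e2"
      note K = kap[OF k2 e(1)]
      define f g where "f = fst (\<kappa> e1)" and "g = snd (\<kappa> e1)"
      have we: "w e1 = k" using wt k2 e(1) by auto
      have A1: "1 \<le> w f \<and> f \<in> Es (w f)" using arc K f_def by blast
      have A2: "1 \<le> w g \<and> g \<in> Es (w g)" using arc K g_def by blast
      have U: "\<exists>!e. e \<in> Es (w f + w g) \<and> (\<kappa> e = (f, g) \<or> \<kappa> e = (g, f))"
        using uniq[of "w f" "w g" f g] A1 A2 K we k2 f_def g_def by auto
      have kk: "w f + w g = k" using K we f_def g_def by simp
      show "e1 = e2" using U e kk f_def g_def by (metis prod.collapse)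
    qed
    show ?thesis using finite_imageD[OF finite_subset[OF img] inj] finB by auto
  qed
qed

abbreviation R where "R e xs \<equiv> Rset Es w \<kappa> tail head e xs"

lemma reach:
  assumes "(e, f) \<in> (kappa_rel a Es \<kappa>)\<^sup>*" and eE: "e \<in> E"
  shows "f \<in> all_arcs a Es \<and> (\<exists>xs. (\<forall>x\<in>set xs. 1 \<le> x) \<and> w f = 1 + sum_list xs \<and> f \<in> R e xs)"
  using assms(1)
proof (induction rule: rtrancl_induct)
  case base
  have "e \<in> Es 1" using eE Es1 by simp
  moreover have "w e = 1" using wt a1 calculation by auto
  ultimately show ?case using arcI[of 1 e] a1
    by (intro conjI exI[of _ "[]"]) auto
next
  case (step f f')
  from step.hyps(2) obtain k where k: "k \<in> {2..a}" "f' \<in> Es k"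
      "f = fst (\<kappa> f') \<or> f = snd (\<kappa> f')"
    unfolding kappa_rel_def by auto
  note K = kap[OF k(1,2)]
  from step.IH obtain xs where xs: "\<forall>x\<in>set xs. 1 \<le> x" "w f = 1 + sum_list xs" "f \<in> R e xs" by blast
  have wk: "w f' = k" using wt k by auto
  obtain g where g: "g \<in> all_arcs a Es" "\<kappa> f' = (f, g) \<or> \<kappa> f' = (g, f)"
    "tail f \<noteq> tail g" "head g = head f" "w f' = w f + w g"
    using k(3) K by (metis prod.collapse add.commute)
  have G: "1 \<le> w g" "g \<in> Es (w g)" using arc[OF g(1)] by auto
  have "f' \<in> all_arcs a Es" using arcI[of k f'] k by auto
  moreover have "f' \<in> R e (w g # xs)"
    using xs(3) G g k wk by auto
  ultimately show ?case using xs G g by (intro conjI exI[of _ "w g # xs"]) auto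
qed

lemma Rbound:
  assumes eE: "e \<in> E"
  shows "(\<forall>x\<in>set xs. 1 \<le> x) \<Longrightarrow> sum_list xs < a \<Longrightarrow>
    (\<forall>f\<in>R e xs. f \<in> all_arcs a Es \<and> w f = 1 + sum_list xs) \<and> finite (R e xs) \<and>
    card (R e xs) \<le> prod_list (map (\<lambda>i. max_indeg V head (Es i)) xs)"
proof (induction xs)
  case Nil
  have "e \<in> Es 1" using eE Es1 by simp
  moreover have "w e = 1" using wt a1 calculation by auto
  ultimately show ?case using arcI[of 1 e] a1 by auto
next
  case (Cons i xs)
  have IH: "(\<forall>f\<in>R e xs. f \<in> all_arcs a Es \<and> w f = 1 + sum_list xs) \<and> finite (R e xs) \<and>
    card (R e xs) \<le> prod_list (map (\<lambda>i. max_indeg V head (Es i)) xs)"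
    using Cons by auto
  have i1: "1 \<le> i" and ia: "1 + sum_list xs + i \<le> a" using Cons.prems by auto
  define md where "md = max_indeg V head (Es i)"
  define G where "G f = {g \<in> Es i. head g = head f}" for f
  define T where "T f = {f'. \<exists>g\<in>Es i.
      head g = head f \<and> tail f \<noteq> tail g \<and> (\<kappa> f' = (f, g) \<or> \<kappa> f' = (g, f)) \<and> f' \<in> Es (w f + i)}" for f
  have Req: "R e (i # xs) = (\<Union>f\<in>R e xs. T f)" unfolding T_def by auto
  have P1: "\<forall>f\<in>R e (i#xs). f \<in> all_arcs a Es \<and> w f = 1 + sum_list (i#xs)"
  proof
    fix f' assume "f' \<in> R e (i#xs)"
    then obtain f where f: "f \<in> R e xs" "f' \<in> Es (w f + i)" by auto
    have wf: "w f = 1 + sum_list xs" using IH f(1) by auto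
    have "f' \<in> all_arcs a Es" using arcI[of "w f + i" f'] f wf ia by auto
    moreover have "w f' = w f + i" using wt[of "w f + i" f'] f wf ia by auto
    ultimately show "f' \<in> all_arcs a Es \<and> w f' = 1 + sum_list (i#xs)" using wf by simp
  qed
  have finEi: "finite (Es i)" using finEs[of i] i1 ia by auto
  have Tb: "finite (T f) \<and> card (T f) \<le> md" if f: "f \<in> R e xs" for f
  proof -
    have fa: "f \<in> all_arcs a Es" and wf: "w f = 1 + sum_list xs" using IH f by auto
    have fE: "f \<in> Es (w f)" using arc fa by auto
    define h where "h g = (THE f'. f' \<in> Es (w f + i) \<and> (\<kappa> f' = (f, g) \<or> \<kappa> f' = (g, f)))" for g
    have sub: "T f \<subseteq> h ` G f"
    proof
      fix f' assume "f' \<in> T f"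
      then obtain g where g: "g \<in> Es i" "head g = head f" "tail f \<noteq> tail g"
        "\<kappa> f' = (f, g) \<or> \<kappa> f' = (g, f)" "f' \<in> Es (w f + i)" unfolding T_def by auto
      have U: "\<exists>!x. x \<in> Es (w f + i) \<and> (\<kappa> x = (f, g) \<or> \<kappa> x = (g, f))"
        using uniq[of "w f" i f g] wf ia i1 fE g by auto
      have "h g = f'" unfolding h_def by (rule the1_equality[OF U]) (use g in auto)
      then show "f' \<in> h ` G f" using g unfolding G_def by auto
    qed
    have finG: "finite (G f)" using finEi unfolding G_def by auto
    have "card (G f) \<le> md"
      unfolding md_def max_indeg_def G_def
      by (rule Max_ge) (use finV headV[OF fa] in auto)
    moreover have "card (T f) \<le> card (G f)"
      using card_mono[OF finite_imageI[OF finG] sub] card_image_le[OF finG, of h] by linarith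
    ultimately show ?thesis using finite_subset[OF sub finite_imageI[OF finG]] by linarith
  qed
  have finR: "finite (R e (i#xs))" unfolding Req using IH Tb by auto
  have "card (R e (i#xs)) \<le> (\<Sum>f\<in>R e xs. card (T f))" unfolding Req
    using card_UN_le IH by blast
  also have "\<dots> \<le> (\<Sum>f\<in>R e xs. md)" by (rule sum_mono) (use Tb in auto)
  also have "\<dots> = card (R e xs) * md" by simp
  also have "\<dots> \<le> prod_list (map (\<lambda>i. max_indeg V head (Es i)) xs) * md"
    using IH by (simp add: mult_le_mono1)
  finally show ?case using P1 finR md_def by (simp add: mult.commute)
qed

end


theorem mainTheorem10:
  fixes V :: "'v set" and E :: "'e set" and tail head :: "'e \<Rightarrow> 'v"
    and a :: nat and Es :: "nat \<Rightarrow> 'e set" and w :: "'e \<Rightarrow> nat"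
    and \<kappa> :: "'e \<Rightarrow> 'e \<times> 'e"
  assumes "loopless_multidigraph V E tail head"
    and "fraternal_completion V E tail head a Es w \<kappa>"
    and "e \<in> E"
  shows "card {f \<in> all_arcs a Es. prec_eq a Es \<kappa> e f} \<le> completion_bound V head a Es"
proof -
  interpret fcl V E tail head a Es w \<kappa> using assms(1,2) by unfold_locales
  define L where "L = {xs :: nat list. (\<forall>x\<in>set xs. 1 \<le> x) \<and> sum_list xs < a}"
  have finL: "finite L"
  proof (rule finite_subset[OF _ finite_lists_length_le[of "{1..a}" a]])
    show "L \<subseteq> {xs. set xs \<subseteq> {1..a} \<and> length xs \<le> a}"
    proof
      fix xs assume "xs \<in> L"
      then have h: "\<forall>x\<in>set xs. 1 \<le> x" "sum_list xs < a" unfolding L_def by auto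
      have "length xs \<le> a" using length_le_sum_list[OF h(1)] h(2) by simp
      moreover have "set xs \<subseteq> {1..a}" using h elem_le_sum_list[of _ xs] by fastforce
      ultimately show "xs \<in> {xs. set xs \<subseteq> {1..a} \<and> length xs \<le> a}" by simp
    qed
  qed simp
  have sub: "{f \<in> all_arcs a Es. prec_eq a Es \<kappa> e f} \<subseteq> (\<Union>xs\<in>L. R e xs)"
  proof
    fix f assume "f \<in> {f \<in> all_arcs a Es. prec_eq a Es \<kappa> e f}"
    then have "(e, f) \<in> (kappa_rel a Es \<kappa>)\<^sup>*" unfolding prec_eq_def by auto
    from reach[OF this assms(3)] obtain xs where xs: "f \<in> all_arcs a Es" "\<forall>x\<in>set xs. 1 \<le> x"
      "w f = 1 + sum_list xs" "f \<in> R e xs" by blast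
    have "w f \<le> a" using arc xs(1) by auto
    then have "xs \<in> L" unfolding L_def using xs by auto
    then show "f \<in> (\<Union>xs\<in>L. R e xs)" using xs by auto
  qed
  have RB: "\<And>xs. xs \<in> L \<Longrightarrow> finite (R e xs) \<and>
      card (R e xs) \<le> prod_list (map (\<lambda>i. max_indeg V head (Es i)) xs)"
    using Rbound[OF assms(3)] unfolding L_def by blast
  have "card {f \<in> all_arcs a Es. prec_eq a Es \<kappa> e f} \<le> card (\<Union>xs\<in>L. R e xs)"
    by (rule card_mono[OF _ sub]) (use finL RB in auto)
  also have "\<dots> \<le> (\<Sum>xs\<in>L. card (R e xs))" by (rule card_UN_le[OF finL])
  also have "\<dots> \<le> (\<Sum>xs\<in>L. prod_list (map (\<lambda>i. max_indeg V head (Es i)) xs))"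
    by (rule sum_mono) (use RB in auto)
  finally show ?thesis unfolding completion_bound_def L_def .
qed

end
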